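(* Fix a constant $c\ge1$. There is a constant $c''>0$ depending only on $c$ such that for all integers $n\ge3$, $U\ge3$ with $n/c\le U\le cn$, and all states $a,b$: if the modified chain $(X_t)$ is started at $X_1=a$, then the probability of the event $T(a,b)$ that $X_{4n}=b$ and no major self-loop is taken at any of the states $1,1',n,n'$ during the transitions at times $1,\dots,4n-1$ satisfies $$\mathbb{P}(T(a,b))\ge\frac{1}{c''n}.$$
   Context: Let $n\ge3$, $U\ge3$ be integers. The "modified chain" is a Markov chain on the $2n$ states $\{1,\dots,n,1',\dots,n'\}$ whose transitions are labeled edges (a multigraph). Every state has exactly three outgoing edges: a "major self-loop" with probability $1/2$, a "continuing link" with probability $\frac12(1-\frac1U)$, and a "switching link" with probability $\frac1{2U}$. Continuing links: $i\to i+1$ for $1\le i\le n-1$, $n\to n'$, $i'\to(i-1)'$ for $2\le i\le n$, $1'\to1$. Switching links: $i\to(i+1)'$ for $1\le i\le n-1$, $n\to n$, $i'\to i-1$ for $2\le i\le n$, $1'\to1'$ (at $n$ and $1'$ the switching link is a self-loop distinct from the major self-loop). *)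

theory Defs
  imports Complex_Main
begin

text \<open>States of the modified chain: (i, False) is state i, (i, True) is state i',
  for 1 \<le> i \<le> n.\<close>
type_synonym state = "nat \<times> bool"

definition states :: "nat \<Rightarrow> state set" where
  "states n = {s. 1 \<le> fst s \<and> fst s \<le> n}"

text \<open>Edge labels: 0 = major self-loop, 1 = continuing link, 2 = switching link.\<close>
definition nxt :: "nat \<Rightarrow> state \<Rightarrow> nat \<Rightarrow> state" where
  "nxt n s l = (let (i, p) = s in
     if l = 0 then s
     else if l = 1 then
       (if \<not> p then (if i < n then (i + 1, False) else (n, True))
        else (if 2 \<le> i then (i - 1, True) else (1, False)))
     else
       (if \<not> p then (if i < n then (i + 1, True) else (n, False))
        else (if 2 \<le> i then (i - 1, False) else (1, True))))"

definition edge_prob :: "nat \<Rightarrow> nat \<Rightarrow> real" where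
  "edge_prob U l = (if l = 0 then 1/2
                    else if l = 1 then (1 - 1 / real U) / 2
                    else 1 / (2 * real U))"

fun path :: "nat \<Rightarrow> state \<Rightarrow> nat list \<Rightarrow> state list" where
  "path n s [] = [s]"
| "path n s (l # ls) = s # path n (nxt n s l) ls"

definition special :: "nat \<Rightarrow> state \<Rightarrow> bool" where
  "special n s \<longleftrightarrow> s \<in> {(1, False), (1, True), (n, False), (n, True)}"

text \<open>Label sequences for the 4n-1 transitions at times 1..4n-1 realising T(a,b):
  X_1 = a, X_{4n} = b, and no major self-loop at 1,1',n,n'.\<close>
definition T_event :: "nat \<Rightarrow> state \<Rightarrow> state \<Rightarrow> nat list set" where
  "T_event n a b = {ls. length ls = 4 * n - 1 \<and> set ls \<subseteq> {0, 1, 2}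
      \<and> last (path n a ls) = b
      \<and> (\<forall>k < length ls. ls ! k = 0 \<longrightarrow> \<not> special n (path n a ls ! k))}"

definition prob_T :: "nat \<Rightarrow> nat \<Rightarrow> state \<Rightarrow> state \<Rightarrow> real" where
  "prob_T n U a b = (\<Sum>ls\<in>T_event n a b. \<Prod>l\<leftarrow>ls. edge_prob U l)"

end

theory Submission
  imports Defs
begin


lemma nxt0[simp]: "nxt n s 0 = s"
  by (cases s) (simp add: nxt_def)

lemma length_path[simp]: "length (path n s ls) = Suc (length ls)"
  by (induction ls arbitrary: s) auto

lemma path_nth0[simp]: "path n s ls ! 0 = s"
  by (cases ls) auto

definition E :: "nat \<Rightarrow> state \<Rightarrow> nat \<Rightarrow> nat list \<Rightarrow> nat list set" where
  "E n s L M = {ls. length ls = L \<and> set ls \<subseteq> {0,1,2} \<and> filter (\<lambda>l. l \<noteq> 0) ls = M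
      \<and> (\<forall>k<length ls. ls ! k = 0 \<longrightarrow> \<not> special n (path n s ls ! k))}"

definition W :: "nat \<Rightarrow> nat \<Rightarrow> state \<Rightarrow> nat \<Rightarrow> nat list \<Rightarrow> real" where
  "W n U s L M = (\<Sum>ls\<in>E n s L M. \<Prod>l\<leftarrow>ls. edge_prob U l)"

definition qn :: "nat \<Rightarrow> state \<Rightarrow> nat list \<Rightarrow> nat" where
  "qn n s M = length (filter (\<lambda>x. \<not> special n x) (path n s M))"

definition Bf :: "nat \<Rightarrow> nat \<Rightarrow> nat" where
  "Bf Z q = (if q = 0 then (if Z = 0 then 1 else 0) else (Z + q - 1) choose Z)"

lemma qn_Nil: "qn n s [] = (if special n s then 0 else 1)"
  by (simp add: qn_def)
lemma qn_Cons: "qn n s (l # M) = (if special n s then 0 else 1) + qn n (nxt n s l) M"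
  by (simp add: qn_def)

lemma Bf_0[simp]: "Bf 0 q = 1" by (simp add: Bf_def)

lemma Bf_rec: "q \<ge> 1 \<Longrightarrow> Bf (Suc Z) q = Bf Z q + Bf (Suc Z) (q - 1)"
proof (cases "q = 1")
  case True then show ?thesis by (simp add: Bf_def)
next
  case False
  assume "q \<ge> 1"
  then obtain r where r: "q = Suc (Suc r)" using False
    by (cases q; cases "q - 1") auto
  show ?thesis unfolding r Bf_def
    by (simp add: add.commute)
qed

lemma finite_E: "finite (E n s L M)"
proof -
  have "E n s L M \<subseteq> {ls. set ls \<subseteq> {0,1,2} \<and> length ls = L}" by (auto simp: E_def)
  moreover have "finite {ls. set ls \<subseteq> ({0,1,2}::nat set) \<and> length ls = L}"
    by (rule finite_lists_length_eq) simp
  ultimately show ?thesis by (rule finite_subset)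
qed

lemma E_Cons0: "ls \<in> E n s L M \<Longrightarrow> \<not> special n s \<Longrightarrow> 0 # ls \<in> E n s (Suc L) M"
  unfolding E_def
  apply (simp only: mem_Collect_eq)
  apply (intro conjI allI impI)
  apply simp
  apply simp
  apply simp
  subgoal for k by (cases k) auto
  done

lemma E_Consm: "ls \<in> E n (nxt n s m) L M \<Longrightarrow> m \<in> {1,2} \<Longrightarrow> m # ls \<in> E n s (Suc L) (m # M)"
  unfolding E_def
  apply (simp only: mem_Collect_eq)
  apply (intro conjI allI impI)
  apply simp
  apply simp
  apply auto[1]
  subgoal for k by (cases k) auto
  done

lemma E_Nil: "[] \<in> E n s 0 []" by (simp add: E_def)

lemma edge_prob_nonneg: "U \<ge> 1 \<Longrightarrow> edge_prob U l \<ge> 0"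
  by (simp add: edge_prob_def)

lemma prod_nonneg: "U \<ge> 1 \<Longrightarrow> (\<Prod>l\<leftarrow>ls. edge_prob U l) \<ge> 0"
  by (induction ls) (auto simp: edge_prob_nonneg)

lemma W_nonneg: "U \<ge> 1 \<Longrightarrow> W n U s L M \<ge> 0"
  unfolding W_def by (intro sum_nonneg prod_nonneg)

lemma W_image: "U \<ge> 1 \<Longrightarrow> A \<subseteq> E n s L M \<Longrightarrow> (\<Sum>ls\<in>A. \<Prod>l\<leftarrow>ls. edge_prob U l) \<le> W n U s L M"
  unfolding W_def by (rule sum_mono2[OF finite_E]) (auto intro: prod_nonneg)

lemma sum_Cons_img: "(\<Sum>ls\<in>(Cons m) ` A. \<Prod>l\<leftarrow>ls. edge_prob U l) = edge_prob U m * (\<Sum>ls\<in>A. \<Prod>l\<leftarrow>ls. edge_prob U l)"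
  by (simp add: sum.reindex sum_distrib_left)

lemma W_ge_img: assumes "U \<ge> 1" "\<And>ls. ls \<in> A \<Longrightarrow> m # ls \<in> E n s L M"
  shows "edge_prob U m * (\<Sum>ls\<in>A. \<Prod>l\<leftarrow>ls. edge_prob U l) \<le> W n U s L M"
proof -
  have "Cons m ` A \<subseteq> E n s L M" using assms(2) by auto
  from W_image[OF assms(1) this] show ?thesis by (simp add: sum_Cons_img)
qed

lemma W_ge_W: assumes "U \<ge> 1" "\<And>ls. ls \<in> E n s' L' M' \<Longrightarrow> m # ls \<in> E n s L M"
  shows "edge_prob U m * W n U s' L' M' \<le> W n U s L M"
  unfolding W_def[of n U s' L' M'] by (rule W_ge_img[OF assms])

lemma W_ge_img2: assumes "U \<ge> 1" "\<And>ls. ls \<in> A \<Longrightarrow> m # ls \<in> E n s L M"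
  "\<And>ls. ls \<in> B \<Longrightarrow> m' # ls \<in> E n s L M" "m \<noteq> m'" "finite A" "finite B"
  shows "edge_prob U m * (\<Sum>ls\<in>A. \<Prod>l\<leftarrow>ls. edge_prob U l)
       + edge_prob U m' * (\<Sum>ls\<in>B. \<Prod>l\<leftarrow>ls. edge_prob U l) \<le> W n U s L M"
proof -
  have d: "(Cons m ` A) \<inter> (Cons m' ` B) = {}" using assms(4) by auto
  have "(\<Sum>ls\<in>(Cons m ` A) \<union> (Cons m' ` B). \<Prod>l\<leftarrow>ls. edge_prob U l) \<le> W n U s L M"
    using assms by (intro W_image) auto
  moreover have "(\<Sum>ls\<in>(Cons m ` A) \<union> (Cons m' ` B). \<Prod>l\<leftarrow>ls. edge_prob U l)
     = (\<Sum>ls\<in>(Cons m ` A). \<Prod>l\<leftarrow>ls. edge_prob U l) + (\<Sum>ls\<in>(Cons m' ` B). \<Prod>l\<leftarrow>ls. edge_prob U l)"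
    using d assms(5,6) by (intro sum.union_disjoint) auto
  ultimately show ?thesis by (simp add: sum_Cons_img)
qed

lemma W_ge_W2: assumes "U \<ge> 1" "\<And>ls. ls \<in> E n s1 L1 M1 \<Longrightarrow> m # ls \<in> E n s L M"
  "\<And>ls. ls \<in> E n s2 L2 M2 \<Longrightarrow> m' # ls \<in> E n s L M" "m \<noteq> m'"
  shows "edge_prob U m * W n U s1 L1 M1 + edge_prob U m' * W n U s2 L2 M2 \<le> W n U s L M"
  unfolding W_def[of n U s1 L1 M1] W_def[of n U s2 L2 M2] by (rule W_ge_img2[OF assms finite_E finite_E])

lemma ep0: "edge_prob U 0 = 1/2" by (simp add: edge_prob_def)

lemma main_count:
  assumes U: "U \<ge> 1"
  shows "set M \<subseteq> {1,2} \<Longrightarrow> length M \<le> L \<Longrightarrow>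
    (\<Prod>l\<leftarrow>M. edge_prob U l) * (1/2)^(L - length M) * real (Bf (L - length M) (qn n s M)) \<le> W n U s L M"
proof (induction L arbitrary: s M)
  case 0
  then have M: "M = []" by simp
  have "(\<Sum>ls\<in>{[]}. \<Prod>l\<leftarrow>ls. edge_prob U l) \<le> W n U s 0 []"
    using E_Nil by (intro W_image[OF U]) auto
  then show ?case using M by simp
next
  case (Suc L)
  show ?case
  proof (cases M)
    case Nil
    show ?thesis
    proof (cases "special n s")
      case True
      then show ?thesis using Nil by (simp add: qn_Nil Bf_def W_nonneg[OF U])
    next
      case False
      have "edge_prob U 0 * W n U s L [] \<le> W n U s (Suc L) []"
        using False by (intro W_ge_W[OF U] E_Cons0)
      moreover have "(1/2)^L \<le> W n U s L []" using Suc.IH[of "[]" s] False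
        by (simp add: qn_Nil Bf_def)
      ultimately show ?thesis using Nil False by (simp add: qn_Nil Bf_def ep0)
    qed
  next
    case (Cons m M')
    have m: "m \<in> {1,2}" and M': "set M' \<subseteq> {1,2}" using Suc.prems Cons by auto
    have lenM': "length M' \<le> L" using Suc.prems Cons by simp
    have IH2: "(\<Prod>l\<leftarrow>M'. edge_prob U l) * (1/2)^(L - length M') * real (Bf (L - length M') (qn n (nxt n s m) M'))
       \<le> W n U (nxt n s m) L M'" using Suc.IH[OF M' lenM'] .
    have img2: "edge_prob U m * W n U (nxt n s m) L M' \<le> W n U s (Suc L) M"
      unfolding Cons using m by (intro W_ge_W[OF U] E_Consm)
    have pm: "edge_prob U m \<ge> 0" using edge_prob_nonneg[OF U] .
    show ?thesis
    proof (cases "special n s")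
      case True
      have "edge_prob U m * ((\<Prod>l\<leftarrow>M'. edge_prob U l) * (1/2)^(L - length M') * real (Bf (L - length M') (qn n (nxt n s m) M')))
          \<le> edge_prob U m * W n U (nxt n s m) L M'" using IH2 pm by (rule mult_left_mono)
      then show ?thesis using img2 True Cons by (simp add: qn_Cons mult.assoc)
    next
      case False
      show ?thesis
      proof (cases "length M' = L")
        case True
        have "edge_prob U m * ((\<Prod>l\<leftarrow>M'. edge_prob U l) * (1/2)^(L - length M') * real (Bf (L - length M') (qn n (nxt n s m) M')))
          \<le> edge_prob U m * W n U (nxt n s m) L M'" using IH2 pm by (rule mult_left_mono)
        then show ?thesis using img2 True Cons by (simp add: mult.assoc)
      next
        case False2: False
        then obtain Z0 where Z0: "L - length M' = Suc Z0" using lenM'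
          by (metis Suc_diff_Suc le_neq_implies_less)
        have lenM: "length M \<le> L" using lenM' False2 Cons by simp
        have IH1: "(\<Prod>l\<leftarrow>M. edge_prob U l) * (1/2)^(L - length M) * real (Bf (L - length M) (qn n s M))
           \<le> W n U s L M" using Suc.IH[OF Suc.prems(1) lenM] .
        have both: "edge_prob U 0 * W n U s L M + edge_prob U m * W n U (nxt n s m) L M' \<le> W n U s (Suc L) M"
          using False m
          by (intro W_ge_W2[OF U] E_Cons0) (auto simp: Cons intro: E_Consm)
        have q: "qn n s M = Suc (qn n (nxt n s m) M')" using False Cons by (simp add: qn_Cons)
        have LM: "L - length M = Z0" using Z0 Cons by simp
        have B: "Bf (Suc Z0) (Suc (qn n (nxt n s m) M')) = Bf Z0 (Suc (qn n (nxt n s m) M')) + Bf (Suc Z0) (qn n (nxt n s m) M')"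
          using Bf_rec[of "Suc (qn n (nxt n s m) M')" Z0] by simp
        define P where "P = (\<Prod>l\<leftarrow>M'. edge_prob U l)"
        define Q where "Q = qn n (nxt n s m) M'"
        have "(\<Prod>l\<leftarrow>M. edge_prob U l) * (1/2)^(Suc L - length M) * real (Bf (Suc L - length M) (qn n s M))
          = edge_prob U m * P * (1/2)^(Suc Z0) * (real (Bf Z0 (Suc Q)) + real (Bf (Suc Z0) Q))"
          using Z0 Cons q B unfolding P_def Q_def by simp
        also have "\<dots> = edge_prob U 0 * (edge_prob U m * P * (1/2)^Z0 * real (Bf Z0 (Suc Q)))
            + edge_prob U m * (P * (1/2)^(Suc Z0) * real (Bf (Suc Z0) Q))"
          by (simp add: ep0 algebra_simps)
        also have "\<dots> \<le> edge_prob U 0 * W n U s L M + edge_prob U m * W n U (nxt n s m) L M'"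
        proof (rule add_mono)
          show "edge_prob U 0 * (edge_prob U m * P * (1/2)^Z0 * real (Bf Z0 (Suc Q))) \<le> edge_prob U 0 * W n U s L M"
            using IH1 LM q Cons unfolding P_def Q_def by (intro mult_left_mono) (auto simp: ep0)
          show "edge_prob U m * (P * (1/2)^(Suc Z0) * real (Bf (Suc Z0) Q)) \<le> edge_prob U m * W n U (nxt n s m) L M'"
            using IH2 Z0 pm unfolding P_def Q_def by (intro mult_left_mono) auto
        qed
        also have "\<dots> \<le> W n U s (Suc L) M" by (rule both)
        finally show ?thesis .
      qed
    qed
  qed
qed



lemma arith_end:
  fixes n x y K :: nat
  assumes n: "n \<ge> 1" and x: "x < 2*n" and y: "y < 2*n" and K: "K \<ge> n"
    and ev: "even (K + 4*n - 3 - x - y)"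
  defines "j \<equiv> ((K + 4*n - 3 - x - y) div 2) mod n"
  shows "((4*n - 2 - (x + j) mod (2*n)) mod (2*n) + (K - 1 - j)) mod (2*n) = y"
proof -
  define D where "D = K + 4*n - 3 - x - y"
  have jn: "j < n" using n unfolding j_def by simp
  have D2: "2 * (D div 2) = D" using ev unfolding D_def by simp
  have j2: "2 * j = D mod (2*n)" unfolding j_def D_def[symmetric]
    by (metis D2 mult_mod_right)
  have Dint: "int D = int K + 4*int n - 3 - int x - int y" unfolding D_def using x y K n by linarith
  have A: "(x + j) mod (2*n) < 2*n" using n by simp
  have "int (((4*n - 2 - (x + j) mod (2*n)) mod (2*n) + (K - 1 - j)) mod (2*n))
      = ((int (4*n-2) - (int x + int j) mod (2*int n)) mod (2*int n) + (int K - 1 - int j)) mod (2*int n)"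
  proof -
    define a where "a = (x + j) mod (2*n)"
    have a1: "int a = (int x + int j) mod (2*int n)" unfolding a_def by (simp add: zmod_int)
    have a2: "int (4*n - 2 - a) = 4 * int n - 2 - int a" using A n unfolding a_def by linarith
    have a3: "int (K - 1 - j) = int K - 1 - int j" using jn K by linarith
    have "int (((4*n - 2 - a) mod (2*n) + (K - 1 - j)) mod (2*n))
       = (int (4*n - 2 - a) mod (2*int n) + int (K - 1 - j)) mod (2*int n)"
      by (simp add: zmod_int)
    also have "\<dots> = ((int (4*n-2) - (int x + int j) mod (2*int n)) mod (2*int n) + (int K - 1 - int j)) mod (2*int n)"
      using a1 a2 a3 n by (simp add: of_nat_diff)
    finally show ?thesis unfolding a_def .
  qed
  also have "\<dots> = (int (4*n-2) - (int x + int j) + (int K - 1 - int j)) mod (2*int n)"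
    by (simp add: mod_add_left_eq mod_diff_right_eq)
  also have "\<dots> = (int y + 2 * int n * (int D div (2 * int n))) mod (2*int n)"
  proof -
    have "int (2*j) = int D mod (2*int n)" using j2 by (simp add: zmod_int)
    hence "2 * int j = int D - 2 * int n * (int D div (2 * int n))"
      by (simp add: minus_div_mult_eq_mod [symmetric] algebra_simps)
    hence "int (4*n-2) - (int x + int j) + (int K - 1 - int j) = int y + 2 * int n * (int D div (2 * int n))"
      using Dint n by (simp add: of_nat_diff)
    thus ?thesis by simp
  qed
  also have "\<dots> = int y" using y by simp
  finally show ?thesis by linarith
qed



definition pos :: "nat \<Rightarrow> state \<Rightarrow> nat" where
  "pos n s = (if snd s then 2*n - fst s else fst s - 1)"

definition spos :: "nat \<Rightarrow> nat \<Rightarrow> bool" where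
  "spos n x \<longleftrightarrow> x = 0 \<or> x = n - 1 \<or> x = n \<or> x = 2*n - 1"

lemma states_iff: "(i, p) \<in> states n \<longleftrightarrow> 1 \<le> i \<and> i \<le> n" by (simp add: states_def)

lemma nxt_states: assumes "s \<in> states n" shows "nxt n s l \<in> states n"
  using assms by (cases s) (auto simp: states_def nxt_def Let_def)

lemma pos_lt: "s \<in> states n \<Longrightarrow> pos n s < 2*n"
  by (cases s) (auto simp: states_def pos_def)

lemma pos_inj: "s \<in> states n \<Longrightarrow> t \<in> states n \<Longrightarrow> pos n s = pos n t \<Longrightarrow> s = t"
  by (cases s; cases t) (auto simp: states_def pos_def split: if_splits)

lemma special_pos: "s \<in> states n \<Longrightarrow> special n s \<longleftrightarrow> spos n (pos n s)"
  by (cases s) (auto simp: states_def pos_def spos_def special_def)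

lemma pos_nxt1: "s \<in> states n \<Longrightarrow> pos n (nxt n s 1) = (pos n s + 1) mod (2*n)"
  by (cases s) (auto simp: states_def pos_def nxt_def Let_def mod_if)

lemma pos_nxt2: "n \<ge> 2 \<Longrightarrow> s \<in> states n \<Longrightarrow> pos n (nxt n s 2) = (4*n - 2 - pos n s) mod (2*n)"
  by (cases s) (auto simp: states_def pos_def nxt_def Let_def mod_if)

lemma path_ne[simp]: "path n s ls \<noteq> []" by (cases ls) auto

lemma path_append: "path n s (xs @ ys) = butlast (path n s xs) @ path n (last (path n s xs)) ys"
  by (induction xs arbitrary: s) auto

lemma last_path_Cons: "last (path n s (l # ls)) = last (path n (nxt n s l) ls)"
  by simp

lemma last_path_filter: "last (path n s ls) = last (path n s (filter (\<lambda>l. l \<noteq> 0) ls))"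
  by (induction ls arbitrary: s) auto

lemma last_path_states: "s \<in> states n \<Longrightarrow> last (path n s ls) \<in> states n"
  by (induction ls arbitrary: s) (simp_all add: nxt_states)

lemma pos_last_rep1: "s \<in> states n \<Longrightarrow> pos n (last (path n s (replicate r 1))) = (pos n s + r) mod (2*n)"
proof (induction r arbitrary: s)
  case 0 then show ?case using pos_lt[OF 0] by simp
next
  case (Suc r)
  have "last (path n s (replicate (Suc r) 1)) = last (path n (nxt n s 1) (replicate r 1))" by simp
  then show ?case using Suc.IH[OF nxt_states[OF Suc.prems]] pos_nxt1[OF Suc.prems]
    by (simp add: mod_add_left_eq)
qed

definition cnt :: "nat \<Rightarrow> state \<Rightarrow> nat list \<Rightarrow> nat" where
  "cnt n s M = length (filter (special n) (path n s M))"

lemma qn_cnt: "qn n s M + cnt n s M = Suc (length M)"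
  unfolding qn_def cnt_def using sum_length_filter_compl[of "special n" "path n s M"] by simp

lemma cnt_append: "cnt n s (xs @ (l # ys)) = cnt n s xs + cnt n (nxt n (last (path n s xs)) l) ys"
proof -
  have "path n s (xs @ (l # ys)) = (butlast (path n s xs) @ [last (path n s xs)]) @ path n (nxt n (last (path n s xs)) l) ys"
    by (simp add: path_append)
  also have "butlast (path n s xs) @ [last (path n s xs)] = path n s xs" by simp
  finally show ?thesis unfolding cnt_def by simp
qed

lemma cnt_rep: "s \<in> states n \<Longrightarrow>
   cnt n s (replicate r 1) = (\<Sum>i<Suc r. if spos n ((pos n s + i) mod (2*n)) then 1 else 0)"
proof (induction r arbitrary: s)
  case 0 then show ?case using pos_lt[OF 0] special_pos[OF 0] by (simp add: cnt_def)
next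
  case (Suc r)
  have "cnt n s (replicate (Suc r) 1) = (if special n s then 1 else 0) + cnt n (nxt n s 1) (replicate r 1)"
    by (simp add: cnt_def)
  also have "\<dots> = (if spos n ((pos n s + 0) mod (2*n)) then 1 else 0)
     + (\<Sum>i<Suc r. if spos n ((pos n s + Suc i) mod (2*n)) then 1 else 0)"
    using Suc.IH[OF nxt_states[OF Suc.prems]] pos_nxt1[OF Suc.prems] special_pos[OF Suc.prems] pos_lt[OF Suc.prems]
    by (simp add: mod_add_left_eq)
  also have "\<dots> = (\<Sum>i<Suc (Suc r). if spos n ((pos n s + i) mod (2*n)) then 1 else 0)"
    by (simp only: sum.lessThan_Suc_shift)
  finally show ?case .
qed

lemma card4: "card {a, b, c, d :: nat} \<le> 4"
  by (simp add: card_insert_if)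

lemma mod_inj: assumes "i < N" "k < N" "(x + i) mod N = (x + k) mod (N::nat)" shows "i = k"
proof -
  have "int ((x + i) mod N) = int ((x + k) mod N)" using assms(3) by simp
  hence "(int x + int i) mod int N = (int x + int k) mod int N" by (simp add: zmod_int)
  hence "(int x + int i - (int x + int k)) mod int N = 0" by (simp add: mod_eq_dvd_iff dvd_eq_mod_eq_0[symmetric])
  hence "(int i - int k) mod int N = 0" by simp
  hence "int N dvd (int i - int k)" by (simp add: dvd_eq_mod_eq_0)
  moreover have ab: "\<bar>int i - int k\<bar> < int N" using assms by linarith
  ultimately have "int i - int k = 0"
  proof -
    assume dv: "int N dvd (int i - int k)"
    show ?thesis
    proof (rule ccontr)
      assume ne: "int i - int k \<noteq> 0"
      from dvd_imp_le_int[OF ne dv] ab show False by linarith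
    qed
  qed
  thus ?thesis by simp
qed

lemma spos_sum_block: assumes "n \<ge> 1" "m \<le> 2*n"
  shows "(\<Sum>i<m. if spos n ((x + i) mod (2*n)) then 1 else 0) \<le> (4::nat)"
proof -
  have "(\<Sum>i<m. if spos n ((x + i) mod (2*n)) then 1 else 0) = card {i\<in>{..<m}. spos n ((x + i) mod (2*n))}"
    by (simp add: sum.If_cases Int_def)
  also have "\<dots> = card ((\<lambda>i. (x + i) mod (2*n)) ` {i\<in>{..<m}. spos n ((x + i) mod (2*n))})"
  proof (rule card_image[symmetric])
    show "inj_on (\<lambda>i. (x + i) mod (2*n)) {i\<in>{..<m}. spos n ((x + i) mod (2*n))}"
    proof (rule inj_onI)
      fix i k assume "i \<in> {i\<in>{..<m}. spos n ((x + i) mod (2*n))}" "k \<in> {i\<in>{..<m}. spos n ((x + i) mod (2*n))}"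
        and eq: "(x + i) mod (2*n) = (x + k) mod (2*n)"
      hence "i < 2*n" "k < 2*n" using assms(2) by auto
      then show "i = k" using mod_inj eq by blast
    qed
  qed
  also have "\<dots> \<le> card {0, n - 1, n, 2*n - 1}"
  proof (rule card_mono)
    show "(\<lambda>i. (x + i) mod (2*n)) ` {i\<in>{..<m}. spos n ((x + i) mod (2*n))} \<subseteq> {0, n - 1, n, 2*n - 1}"
      by (rule image_subsetI) (simp add: spos_def)
  qed simp
  also have "\<dots> \<le> 4" by (rule card4)
  finally show ?thesis .
qed

lemma spos_sum_2block: assumes "n \<ge> 1" "m \<le> 4*n"
  shows "(\<Sum>i<m. if spos n ((x + i) mod (2*n)) then 1 else 0) \<le> (8::nat)"
proof (cases "m \<le> 2*n")
  case True then show ?thesis using spos_sum_block[OF assms(1) True, of x] by simp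
next
  case False
  define f where "f = (\<lambda>i. if spos n ((x + i) mod (2*n)) then 1 else (0::nat))"
  have split: "(\<Sum>i<m. f i) = (\<Sum>i<2*n. f i) + (\<Sum>i<m - 2*n. f (i + 2*n))"
  proof -
    have "{..<m} = {..<2*n} \<union> {2*n..<m}" using False by auto
    hence "(\<Sum>i<m. f i) = (\<Sum>i<2*n. f i) + (\<Sum>i\<in>{2*n..<m}. f i)"
      by (simp add: sum.union_disjoint ivl_disj_int)
    also have "(\<Sum>i\<in>{2*n..<m}. f i) = (\<Sum>i<m - 2*n. f (i + 2*n))"
      using False by (simp add: sum.atLeastLessThan_shift_0[of f "2*n" m] atLeast0LessThan add.commute)
    finally show ?thesis .
  qed
  have per: "f (i + 2*n) = f i" for i unfolding f_def
    by (simp add: add.assoc[symmetric])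
  have "(\<Sum>i<m - 2*n. f (i + 2*n)) = (\<Sum>i<m - 2*n. f i)" using per by simp
  moreover have "(\<Sum>i<m - 2*n. f i) \<le> 4" unfolding f_def using assms by (intro spos_sum_block) auto
  moreover have "(\<Sum>i<2*n. f i) \<le> 4" unfolding f_def using assms by (intro spos_sum_block) auto
  ultimately show ?thesis using split unfolding f_def by simp
qed



definition Mv :: "nat \<Rightarrow> nat \<Rightarrow> nat list" where
  "Mv j K = replicate j 1 @ 2 # replicate (K - 1 - j) 1"

lemma len_Mv: "j < K \<Longrightarrow> length (Mv j K) = K" by (simp add: Mv_def)

lemma set_Mv: "set (Mv j K) \<subseteq> {1,2}" by (auto simp: Mv_def)

lemma prod_Mv: "j < K \<Longrightarrow> (\<Prod>l\<leftarrow>Mv j K. edge_prob U l) = edge_prob U 1 ^ (K - 1) * edge_prob U 2"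
proof -
  assume "j < K"
  then have "j + (K - 1 - j) = K - 1" by simp
  then show ?thesis by (simp add: Mv_def power_add[symmetric] mult.assoc mult.commute[of "edge_prob U 2"])
qed

lemma last_path_append: "last (path n s (xs @ ys)) = last (path n (last (path n s xs)) ys)"
  by (induction xs arbitrary: s) auto

lemma pos_last_Mv: assumes "n \<ge> 2" "s \<in> states n"
  shows "pos n (last (path n s (Mv j K))) = ((4*n - 2 - (pos n s + j) mod (2*n)) mod (2*n) + (K - 1 - j)) mod (2*n)"
proof -
  define s1 where "s1 = last (path n s (replicate j 1))"
  have s1: "s1 \<in> states n" unfolding s1_def using assms(2) by (rule last_path_states)
  have p1: "pos n s1 = (pos n s + j) mod (2*n)" unfolding s1_def using pos_last_rep1[OF assms(2)] .
  have s2: "nxt n s1 2 \<in> states n" using s1 by (rule nxt_states)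
  have p2: "pos n (nxt n s1 2) = (4*n - 2 - pos n s1) mod (2*n)" using pos_nxt2[OF assms(1) s1] .
  have "last (path n s (Mv j K)) = last (path n (nxt n s1 2) (replicate (K - 1 - j) 1))"
    unfolding Mv_def s1_def by (simp add: last_path_append)
  then show ?thesis using pos_last_rep1[OF s2] p1 p2 by simp
qed

lemma cnt_Mv: assumes "n \<ge> 2" "s \<in> states n" "j < 2*n" "K - j \<le> 4*n"
  shows "cnt n s (Mv j K) \<le> 12"
proof -
  define s1 where "s1 = last (path n s (replicate j 1))"
  have s1: "s1 \<in> states n" unfolding s1_def using assms(2) by (rule last_path_states)
  have s2: "nxt n s1 2 \<in> states n" using s1 by (rule nxt_states)
  have "cnt n s (Mv j K) = cnt n s (replicate j 1) + cnt n (nxt n s1 2) (replicate (K - 1 - j) 1)"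
    unfolding Mv_def s1_def by (rule cnt_append)
  moreover have "cnt n s (replicate j 1) \<le> 4"
    unfolding cnt_rep[OF assms(2)] using assms by (intro spos_sum_block) auto
  moreover have "cnt n (nxt n s1 2) (replicate (K - 1 - j) 1) \<le> 8"
    unfolding cnt_rep[OF s2] using assms by (intro spos_sum_2block) auto
  ultimately show ?thesis by simp
qed

lemma qn_Mv: assumes "n \<ge> 2" "s \<in> states n" "j < 2*n" "K - j \<le> 4*n" "j < K"
  shows "Suc K \<le> qn n s (Mv j K) + 12"
  using cnt_Mv[OF assms(1-4)] qn_cnt[of n s "Mv j K"] len_Mv[OF assms(5)] by simp

lemma cnt_le: "cnt n s M \<le> Suc (length M)"
  unfolding cnt_def using length_filter_le[of "special n" "path n s M"] by simp

lemma qn_append_ge: "qn n (nxt n (last (path n s xs)) l) ys \<le> qn n s (xs @ l # ys)"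
proof -
  have a: "qn n s (xs @ l # ys) + cnt n s (xs @ l # ys) = Suc (length (xs @ l # ys))" by (rule qn_cnt)
  have b: "qn n (nxt n (last (path n s xs)) l) ys + cnt n (nxt n (last (path n s xs)) l) ys = Suc (length ys)" by (rule qn_cnt)
  have c: "cnt n s (xs @ l # ys) = cnt n s xs + cnt n (nxt n (last (path n s xs)) l) ys" by (rule cnt_append)
  have d: "cnt n s xs \<le> Suc (length xs)" by (rule cnt_le)
  show ?thesis using a b c d by simp
qed

lemma three_cons: "p < 6 \<Longrightarrow> \<not> spos 3 p \<or> \<not> spos 3 ((p+1) mod 6) \<or> \<not> spos 3 ((p+2) mod 6)"
proof -
  assume "p < 6"
  then consider "p=0"|"p=1"|"p=2"|"p=3"|"p=4"|"p=5" by linarith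
  then show ?thesis by cases (simp_all add: spos_def)
qed

lemma qn_Mv3: assumes "s \<in> states 3" "j + 3 \<le> K"
  shows "1 \<le> qn 3 s (Mv j K)"
proof -
  define s1 where "s1 = last (path 3 s (replicate j 1))"
  have s1: "s1 \<in> states 3" unfolding s1_def using assms(1) by (rule last_path_states)
  define t where "t = nxt 3 s1 2"
  have t: "t \<in> states 3" unfolding t_def using s1 by (rule nxt_states)
  obtain r where r: "K - 1 - j = Suc (Suc r)" using assms(2) by (intro that[of "K - 3 - j"]) simp
  have "qn 3 t (replicate (K - 1 - j) 1) \<le> qn 3 s (Mv j K)"
    unfolding Mv_def t_def s1_def by (rule qn_append_ge)
  moreover have t1: "nxt 3 t 1 \<in> states 3" using t by (rule nxt_states)
  have t2: "nxt 3 (nxt 3 t 1) 1 \<in> states 3" using t1 by (rule nxt_states)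
  have "(if special 3 t then 0 else 1) + (if special 3 (nxt 3 t 1) then 0 else 1) + (if special 3 (nxt 3 (nxt 3 t 1) 1) then 0 else 1)
      \<le> qn 3 t (replicate (K - 1 - j) 1)"
    unfolding r by (cases r) (auto simp: qn_Cons qn_Nil)
  moreover have "\<not> special 3 t \<or> \<not> special 3 (nxt 3 t 1) \<or> \<not> special 3 (nxt 3 (nxt 3 t 1) 1)"
  proof -
    have pt: "pos 3 t < 6" using pos_lt[OF t] by simp
    have "pos 3 (nxt 3 t 1) = (pos 3 t + 1) mod 6" using pos_nxt1[OF t] by simp
    moreover have "pos 3 (nxt 3 (nxt 3 t 1) 1) = (pos 3 t + 2) mod 6" using pos_nxt1[OF t1] calculation
      by (simp add: mod_Suc_eq)
    ultimately show ?thesis using three_cons[OF pt] special_pos[OF t] special_pos[OF t1] special_pos[OF t2] by auto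
  qed
  ultimately show ?thesis by (auto split: if_splits)
qed



lemma half_sum: "2 * (\<Sum>Z\<le>h. (2*h+1) choose Z) = (2::nat)^(2*h+1)"
proof -
  define N where "N = 2*h+1"
  have un: "{..N} = {..h} \<union> {Suc h..N}" unfolding N_def by auto
  have "(2::nat)^N = (\<Sum>k\<le>N. N choose k)" by (simp add: choose_row_sum)
  also have "\<dots> = (\<Sum>Z\<le>h. N choose Z) + (\<Sum>k\<in>{Suc h..N}. N choose k)"
    unfolding un by (rule sum.union_disjoint) auto
  also have "(\<Sum>k\<in>{Suc h..N}. N choose k) = (\<Sum>Z\<le>h. N choose (N - Z))"
  proof -
    have img: "(\<lambda>Z. N - Z) ` {..h} = {Suc h..N}"
    proof
      show "(\<lambda>Z. N - Z) ` {..h} \<subseteq> {Suc h..N}" unfolding N_def by auto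
      show "{Suc h..N} \<subseteq> (\<lambda>Z. N - Z) ` {..h}"
      proof
        fix k assume "k \<in> {Suc h..N}"
        then have "k = N - (N - k)" "N - k \<le> h" unfolding N_def by auto
        then show "k \<in> (\<lambda>Z. N - Z) ` {..h}" by blast
      qed
    qed
    have inj: "inj_on (\<lambda>Z. N - Z) {..h}" unfolding N_def by (rule inj_onI) auto
    show ?thesis using sum.reindex[OF inj, of "\<lambda>k. N choose k"] img by simp
  qed
  also have "(\<Sum>Z\<le>h. N choose (N - Z)) = (\<Sum>Z\<le>h. N choose Z)"
    by (rule sum.cong) (auto simp: N_def binomial_symmetric[symmetric])
  finally show ?thesis unfolding N_def by simp
qed

lemma parity_sum: "2^(2*h+1) \<le> 4 * (\<Sum>Z\<in>{Z. Z \<le> Suc h \<and> even (Z + p)}. (2*h+1) choose Z)"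
proof -
  define N where "N = 2*h+1"
  define f where "f Z = N choose Z" for Z
  define A where "A = {Z. Z \<le> Suc h \<and> even (Z + p)}"
  define B0 where "B0 = {Z. Z \<le> h \<and> even (Z + p)}"
  define B1 where "B1 = {Z. Z \<le> h \<and> odd (Z + p)}"
  have fA: "finite A" unfolding A_def by simp
  have S0: "(\<Sum>Z\<in>B0. f Z) \<le> (\<Sum>Z\<in>A. f Z)"
    using fA by (intro sum_mono2) (auto simp: A_def B0_def)
  have mono: "f Z \<le> f (Suc Z)" if "Z \<le> h" for Z
  proof (cases "Z = h")
    case True
    have "N choose Suc (N div 2) = N choose (N div 2)" by (rule central_binomial_odd) (simp add: N_def)
    moreover have "N div 2 = h" unfolding N_def by simp
    ultimately show ?thesis using True unfolding f_def by simp
  next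
    case False
    then show ?thesis unfolding f_def using that by (intro binomial_mono) (auto simp: N_def)
  qed
  have S1: "(\<Sum>Z\<in>B1. f Z) \<le> (\<Sum>Z\<in>A. f Z)"
  proof -
    have "(\<Sum>Z\<in>B1. f Z) \<le> (\<Sum>Z\<in>B1. f (Suc Z))" by (rule sum_mono) (auto simp: B1_def intro: mono)
    also have "\<dots> = (\<Sum>Z\<in>Suc ` B1. f Z)" by (simp add: sum.reindex)
    also have "\<dots> \<le> (\<Sum>Z\<in>A. f Z)"
      using fA by (intro sum_mono2) (auto simp: A_def B1_def)
    finally show ?thesis .
  qed
  have "(\<Sum>Z\<le>h. f Z) = (\<Sum>Z\<in>B0. f Z) + (\<Sum>Z\<in>B1. f Z)"
  proof -
    have "{..h} = B0 \<union> B1" unfolding B0_def B1_def by auto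
    moreover have "B0 \<inter> B1 = {}" unfolding B0_def B1_def by auto
    moreover have "finite B0" "finite B1" unfolding B0_def B1_def by auto
    ultimately show ?thesis by (simp add: sum.union_disjoint)
  qed
  hence "2 * (\<Sum>Z\<le>h. f Z) \<le> 4 * (\<Sum>Z\<in>A. f Z)" using S0 S1 by linarith
  thus ?thesis using half_sum[of h] unfolding f_def A_def N_def by simp
qed



definition jj :: "nat \<Rightarrow> nat \<Rightarrow> nat \<Rightarrow> nat \<Rightarrow> nat" where
  "jj n x y K = ((K + 4*n - 3 - x - y) div 2) mod n"

definition MM :: "nat \<Rightarrow> state \<Rightarrow> state \<Rightarrow> nat \<Rightarrow> nat list" where
  "MM n a b Z = Mv (jj n (pos n a) (pos n b) (4*n - 1 - Z)) (4*n - 1 - Z)"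

lemma MM_facts:
  assumes n: "n \<ge> 3" and a: "a \<in> states n" and b: "b \<in> states n"
    and Z: "Z + n \<le> 4*n - 1" and ev: "even (Z + pos n a + pos n b)"
  shows "length (MM n a b Z) = 4*n - 1 - Z" "set (MM n a b Z) \<subseteq> {1,2}"
    "last (path n a (MM n a b Z)) = b"
    "jj n (pos n a) (pos n b) (4*n - 1 - Z) < n"
proof -
  define x where "x = pos n a"
  define y where "y = pos n b"
  define K where "K = 4*n - 1 - Z"
  define j where "j = jj n x y K"
  have x: "x < 2*n" unfolding x_def using pos_lt[OF a] .
  have y: "y < 2*n" unfolding y_def using pos_lt[OF b] .
  have K: "K \<ge> n" unfolding K_def using Z by simp
  have jn: "j < n" unfolding j_def jj_def using n by simp
  show "jj n (pos n a) (pos n b) (4*n - 1 - Z) < n" using jn unfolding j_def x_def y_def K_def .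
  have jK: "j < K" using jn K by simp
  show "length (MM n a b Z) = 4*n - 1 - Z" unfolding MM_def using len_Mv[OF jK]
    unfolding j_def x_def y_def K_def by simp
  show "set (MM n a b Z) \<subseteq> {1,2}" unfolding MM_def by (rule set_Mv)
  have sum: "(K + 4*n - 3 - x - y) + (Z + x + y) = 8*n - 4" unfolding K_def using Z x y n by simp
  have ev2: "even (K + 4*n - 3 - x - y)"
  proof -
    have "even (Z + x + y)" using ev unfolding x_def y_def .
    moreover have "even (8*n - 4)" using n by presburger
    ultimately show ?thesis using sum by (metis even_add)
  qed
  have "pos n (last (path n a (MM n a b Z))) = ((4*n - 2 - (x + j) mod (2*n)) mod (2*n) + (K - 1 - j)) mod (2*n)"
    unfolding MM_def j_def x_def y_def K_def using pos_last_Mv[of n a] n a by simp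
  also have "\<dots> = y" unfolding j_def jj_def using arith_end[of n x y K] n x y K ev2 by simp
  finally have "pos n (last (path n a (MM n a b Z))) = pos n b" unfolding y_def .
  then show "last (path n a (MM n a b Z)) = b"
    using pos_inj[OF last_path_states[OF a] b] by simp
qed

lemma finite_T: "finite (T_event n a b)"
proof -
  have "T_event n a b \<subseteq> {ls. set ls \<subseteq> {0,1,2} \<and> length ls = 4*n-1}" by (auto simp: T_event_def)
  moreover have "finite {ls. set ls \<subseteq> ({0,1,2}::nat set) \<and> length ls = 4*n-1}"
    by (rule finite_lists_length_eq) simp
  ultimately show ?thesis by (rule finite_subset)
qed

lemma family_sum:
  assumes n: "n \<ge> 3" and U: "U \<ge> 1" and a: "a \<in> states n" and b: "b \<in> states n"
    and fin: "finite Zs" and Zs: "\<And>Z. Z \<in> Zs \<Longrightarrow> Z + n \<le> 4*n - 1 \<and> even (Z + pos n a + pos n b)"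
  shows "(\<Sum>Z\<in>Zs. W n U a (4*n-1) (MM n a b Z)) \<le> prob_T n U a b"
proof -
  have sub: "(\<Union>Z\<in>Zs. E n a (4*n-1) (MM n a b Z)) \<subseteq> T_event n a b"
  proof
    fix ls assume "ls \<in> (\<Union>Z\<in>Zs. E n a (4*n-1) (MM n a b Z))"
    then obtain Z where Z: "Z \<in> Zs" and ls: "ls \<in> E n a (4*n-1) (MM n a b Z)" by blast
    have "last (path n a ls) = last (path n a (MM n a b Z))"
      using ls last_path_filter[of n a ls] by (simp add: E_def)
    also have "\<dots> = b" using MM_facts[OF n a b] Zs[OF Z] by blast
    finally show "ls \<in> T_event n a b" using ls by (simp add: E_def T_event_def)
  qed
  have disj: "E n a (4*n-1) (MM n a b Z) \<inter> E n a (4*n-1) (MM n a b Z') = {}"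
    if "Z \<in> Zs" "Z' \<in> Zs" "Z \<noteq> Z'" for Z Z'
  proof -
    have z1: "Z + n \<le> 4*n - 1" "even (Z + pos n a + pos n b)" using Zs that(1) by auto
    have z2: "Z' + n \<le> 4*n - 1" "even (Z' + pos n a + pos n b)" using Zs that(2) by auto
    have "length (MM n a b Z) = 4*n - 1 - Z" using MM_facts(1)[OF n a b z1] .
    moreover have "length (MM n a b Z') = 4*n - 1 - Z'" using MM_facts(1)[OF n a b z2] .
    ultimately have "length (MM n a b Z) \<noteq> length (MM n a b Z')" using z1 z2 that(3) by simp
    then have "MM n a b Z \<noteq> MM n a b Z'" by auto
    then show ?thesis by (auto simp: E_def)
  qed
  have "(\<Sum>Z\<in>Zs. W n U a (4*n-1) (MM n a b Z)) = (\<Sum>ls\<in>(\<Union>Z\<in>Zs. E n a (4*n-1) (MM n a b Z)). \<Prod>l\<leftarrow>ls. edge_prob U l)"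
    unfolding W_def using fin disj by (intro sum.UNION_disjoint[symmetric]) (auto simp: finite_E)
  also have "\<dots> \<le> prob_T n U a b"
    unfolding prob_T_def using sub finite_T by (intro sum_mono2) (auto intro: prod_nonneg[OF U])
  finally show ?thesis .
qed

lemma term_bound:
  assumes n: "n \<ge> 3" and U: "U \<ge> 1" and a: "a \<in> states n" and b: "b \<in> states n"
    and Z: "Z + n \<le> 4*n - 1" and ev: "even (Z + pos n a + pos n b)"
  shows "real (Bf Z (qn n a (MM n a b Z))) * ((1/2)^(4*n-1) * (1 - 1/real U)^(4*n-1) / real U)
     \<le> W n U a (4*n-1) (MM n a b Z)"
proof -
  define K where "K = 4*n - 1 - Z"
  have len: "length (MM n a b Z) = K" unfolding K_def using MM_facts[OF n a b Z ev] by simp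
  have KL: "K \<le> 4*n-1" "4*n - 1 - K = Z" unfolding K_def using Z by auto
  have K1: "K \<ge> 1" unfolding K_def using Z n by simp
  have mc: "(\<Prod>l\<leftarrow>MM n a b Z. edge_prob U l) * (1/2)^Z * real (Bf Z (qn n a (MM n a b Z)))
      \<le> W n U a (4*n-1) (MM n a b Z)"
    using main_count[OF U MM_facts(2)[OF n a b Z ev], of "4*n-1"] len KL by simp
  have jK: "jj n (pos n a) (pos n b) K < K" using MM_facts(4)[OF n a b Z ev] Z unfolding K_def by simp
  have prod: "(\<Prod>l\<leftarrow>MM n a b Z. edge_prob U l) = ((1 - 1/real U)/2)^(K-1) * (1/(2*real U))"
    unfolding MM_def K_def[symmetric] using prod_Mv[OF jK] by (simp add: edge_prob_def)
  have U0: "0 \<le> 1 - 1/real U" "1 - 1/real U \<le> 1" using U by auto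
  have pw: "(1 - 1/real U)^(4*n-1) \<le> (1 - 1/real U)^(K-1)"
    using U0 KL by (intro power_decreasing) auto
  have eq: "(1/2::real)^Z * ((1 - 1/real U)/2)^(K-1) * (1/(2*real U)) = (1/2)^(4*n-1) * (1 - 1/real U)^(K-1) / real U"
  proof -
    have "Z + (K - 1) + 1 = 4*n-1" using KL K1 by simp
    hence "(1/2::real)^(4*n-1) = (1/2)^Z * (1/2)^(K-1) * (1/2)" by (metis power_add power_one_right)
    thus ?thesis by (simp add: power_divide field_simps)
  qed
  have "real (Bf Z (qn n a (MM n a b Z))) * ((1/2)^(4*n-1) * (1 - 1/real U)^(4*n-1) / real U)
      \<le> real (Bf Z (qn n a (MM n a b Z))) * ((1/2)^(4*n-1) * (1 - 1/real U)^(K-1) / real U)"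
    using pw U by (intro mult_left_mono divide_right_mono) auto
  also have "\<dots> = (\<Prod>l\<leftarrow>MM n a b Z. edge_prob U l) * (1/2)^Z * real (Bf Z (qn n a (MM n a b Z)))"
    using eq prod by (simp add: mult_ac)
  also have "\<dots> \<le> W n U a (4*n-1) (MM n a b Z)" by (rule mc)
  finally show ?thesis .
qed



lemma core:
  assumes n: "n \<ge> 3" and U: "U \<ge> 1" and a: "a \<in> states n" and b: "b \<in> states n"
  shows "(1/2)^14 * (1 - 1/real U)^(4*n-1) / real U \<le> prob_T n U a b"
proof -
  define \<rho> where "\<rho> = (1/2::real)^(4*n-1) * (1 - 1/real U)^(4*n-1) / real U"
  have \<rho>0: "\<rho> \<ge> 0" unfolding \<rho>_def using U by auto
  define p where "p = pos n a + pos n b"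
  have gen: "(\<Sum>Z\<in>Zs. real (Bf Z (qn n a (MM n a b Z)))) * \<rho> \<le> prob_T n U a b"
    if fin: "finite Zs" and Zs: "\<And>Z. Z \<in> Zs \<Longrightarrow> Z + n \<le> 4*n - 1 \<and> even (Z + pos n a + pos n b)" for Zs
  proof -
    have "(\<Sum>Z\<in>Zs. real (Bf Z (qn n a (MM n a b Z)))) * \<rho> = (\<Sum>Z\<in>Zs. real (Bf Z (qn n a (MM n a b Z))) * \<rho>)"
      by (simp add: sum_distrib_right)
    also have "\<dots> \<le> (\<Sum>Z\<in>Zs. W n U a (4*n-1) (MM n a b Z))"
      unfolding \<rho>_def using Zs by (intro sum_mono term_bound[OF n U a b]) auto
    also have "\<dots> \<le> prob_T n U a b" by (rule family_sum[OF n U a b fin Zs])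
    finally show ?thesis .
  qed
  show ?thesis
  proof (cases "n = 3")
    case True
    define Zs where "Zs = {Z. Z \<le> 1 \<and> even (Z + p)}"
    have fin: "finite Zs" unfolding Zs_def by simp
    have ZsP: "Z + n \<le> 4*n - 1 \<and> even (Z + pos n a + pos n b)" if "Z \<in> Zs" for Z
      using that True unfolding Zs_def p_def by (auto simp: add.assoc)
    obtain Z0 where Z0: "Z0 \<in> Zs"
    proof (cases "even p")
      case True then show ?thesis using that[of 0] unfolding Zs_def by simp
    next
      case False then show ?thesis using that[of 1] unfolding Zs_def by simp
    qed
    have Bf1: "1 \<le> Bf Z (qn n a (MM n a b Z))" if "Z \<in> Zs" for Z
    proof -
      have z: "Z + n \<le> 4*n - 1" "even (Z + pos n a + pos n b)" using ZsP[OF that] by auto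
      have j: "jj n (pos n a) (pos n b) (4*n - 1 - Z) < n" using MM_facts(4)[OF n a b z] .
      have "1 \<le> qn 3 a (Mv (jj n (pos n a) (pos n b) (4*n - 1 - Z)) (4*n - 1 - Z))"
      proof (rule qn_Mv3)
        show "a \<in> states 3" using a True by simp
        have "Z \<le> 1" using that unfolding Zs_def by simp
        then show "jj n (pos n a) (pos n b) (4*n - 1 - Z) + 3 \<le> 4*n - 1 - Z" using j True by simp
      qed
      then have q: "1 \<le> qn n a (MM n a b Z)" unfolding MM_def using True by simp
      show ?thesis unfolding Bf_def using q by (simp add: Suc_leI)
    qed
    have "1 \<le> (\<Sum>Z\<in>Zs. real (Bf Z (qn n a (MM n a b Z))))"
    proof -
      have "real (Bf Z0 (qn n a (MM n a b Z0))) \<le> (\<Sum>Z\<in>Zs. real (Bf Z (qn n a (MM n a b Z))))"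
        using fin Z0 by (intro member_le_sum) auto
      moreover have "1 \<le> real (Bf Z0 (qn n a (MM n a b Z0)))" using Bf1[OF Z0] by simp
      ultimately show ?thesis by linarith
    qed
    hence "\<rho> \<le> prob_T n U a b" using gen[OF fin ZsP] \<rho>0
      by (meson mult_le_cancel_right1 order_trans not_le)
    moreover have "(1/2)^14 * (1 - 1/real U)^(4*n-1) / real U \<le> \<rho>"
      unfolding \<rho>_def using True U by (intro divide_right_mono mult_right_mono) auto
    ultimately show ?thesis by linarith
  next
    case False
    then have n4: "n \<ge> 4" using n by simp
    define h where "h = 2*n - 7"
    have h: "2*h + 1 = 4*n - 13" "Suc h = 2*n - 6" unfolding h_def using n4 by auto
    define Zs where "Zs = {Z. Z \<le> Suc h \<and> even (Z + p)}"
    have fin: "finite Zs" unfolding Zs_def by simp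
    have ZsP: "Z + n \<le> 4*n - 1 \<and> even (Z + pos n a + pos n b)" if "Z \<in> Zs" for Z
      using that n4 unfolding Zs_def p_def h_def by (auto simp: add.assoc)
    have Bfb: "(4*n - 13) choose Z \<le> Bf Z (qn n a (MM n a b Z))" if "Z \<in> Zs" for Z
    proof -
      have z: "Z + n \<le> 4*n - 1" "even (Z + pos n a + pos n b)" using ZsP[OF that] by auto
      have Zh: "Z \<le> 2*n - 6" using that h unfolding Zs_def by simp
      define K where "K = 4*n - 1 - Z"
      define j where "j = jj n (pos n a) (pos n b) K"
      have j: "j < n" using MM_facts(4)[OF n a b z] unfolding j_def K_def .
      have "Suc K \<le> qn n a (Mv j K) + 12"
        using j n4 Zh a unfolding K_def by (intro qn_Mv) auto
      then have q: "Suc K \<le> qn n a (MM n a b Z) + 12" unfolding MM_def j_def K_def .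
      have K: "K = 4*n - 1 - Z" by (simp add: K_def)
      have q0: "qn n a (MM n a b Z) \<noteq> 0" using q K Zh n4 by simp
      have "4*n - 13 \<le> Z + qn n a (MM n a b Z) - 1" using q K Zh n4 by simp
      then have "(4*n - 13) choose Z \<le> (Z + qn n a (MM n a b Z) - 1) choose Z" by (rule binomial_right_mono)
      then show ?thesis unfolding Bf_def using q0 by simp
    qed
    have "(2::nat)^(4*n-13) \<le> 4 * (\<Sum>Z\<in>Zs. (4*n - 13) choose Z)"
      using parity_sum[of h p] unfolding Zs_def h by simp
    also have "\<dots> \<le> 4 * (\<Sum>Z\<in>Zs. Bf Z (qn n a (MM n a b Z)))"
      using Bfb by (intro mult_left_mono sum_mono) auto
    finally have "real ((2::nat)^(4*n-13)) \<le> real (4 * (\<Sum>Z\<in>Zs. Bf Z (qn n a (MM n a b Z))))"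
      by (simp only: of_nat_le_iff)
    hence S: "2^(4*n-13) / 4 \<le> (\<Sum>Z\<in>Zs. real (Bf Z (qn n a (MM n a b Z))))" by simp
    have "(2::real)^(4*n-13) / 4 * \<rho> \<le> prob_T n U a b"
      using gen[OF fin ZsP] mult_right_mono[OF S \<rho>0] by linarith
    moreover have "(2::real)^(4*n-13) / 4 * \<rho> = (1/2)^14 * (1 - 1/real U)^(4*n-1) / real U"
    proof -
      have "(2::real)^(4*n-13) / 4 * (1/2)^(4*n-1) = (1/2)^14"
      proof -
        have e: "4*n-1 = (4*n-13) + 12" using n4 by simp
        show ?thesis unfolding e by (simp add: power_add power_divide field_simps)
      qed
      thus ?thesis unfolding \<rho>_def by (simp add: field_simps)
    qed
    ultimately show ?thesis by (metis order_trans order_refl)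
  qed
qed



lemma pow_bound:
  fixes c :: real
  assumes U: "U \<ge> 3" and c: "real n \<le> c * real U"
  shows "exp (-8*c) \<le> (1 - 1/real U)^(4*n-1)"
proof -
  define x where "x = 1/real U"
  have x0: "0 \<le> x" "x \<le> 1/2" "x < 1" unfolding x_def using U by auto
  have lnb: "-2*x \<le> ln (1 - x)"
  proof -
    have "- x - 2 * x^2 \<le> ln (1 - x)" using ln_one_minus_pos_lower_bound[OF x0(1,2)] .
    moreover have "2 * x^2 \<le> x" using mult_left_mono[of "2*x" 1 x] x0 by (simp add: power2_eq_square mult_ac)
    ultimately show ?thesis by linarith
  qed
  have pos: "0 < 1 - x" using x0 by simp
  have "(1 - x)^(4*n-1) = exp (real (4*n-1) * ln (1 - x))"
    using pos by (simp add: exp_of_nat_mult exp_ln)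
  moreover have "-8*c \<le> real (4*n-1) * ln (1 - x)"
  proof -
    have "real (4*n-1) * ln (1 - x) \<ge> real (4*n-1) * (-2*x)"
      using lnb by (intro mult_left_mono) auto
    moreover have "real (4*n-1) * (-2*x) \<ge> -8*c"
    proof -
      have "real (4*n-1) \<le> 4 * real n" by simp
      hence "real (4*n-1) * (2*x) \<le> 4 * real n * (2*x)" using x0 by (intro mult_right_mono) auto
      also have "4 * real n * (2*x) = 8 * (real n / real U)" unfolding x_def by simp
      also have "real n / real U \<le> c" using c U by (simp add: divide_le_eq)
      finally show ?thesis by linarith
    qed
    ultimately show ?thesis by linarith
  qed
  ultimately show ?thesis unfolding x_def by simp
qed

theorem lemma11:
  fixes c :: real
  assumes "c \<ge> 1"
  shows "\<exists>c''>0. \<forall>n U :: nat. \<forall>a b.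
           3 \<le> n \<longrightarrow> 3 \<le> U \<longrightarrow> real n / c \<le> real U \<longrightarrow> real U \<le> c * real n \<longrightarrow>
           a \<in> states n \<longrightarrow> b \<in> states n \<longrightarrow>
           prob_T n U a b \<ge> 1 / (c'' * real n)"
proof (intro exI[of _ "2^14 * exp (8*c) * c"] conjI allI impI)
  show "0 < (2::real)^14 * exp (8*c) * c" using assms by simp
  fix n U :: nat and a b
  assume n: "3 \<le> n" and U: "3 \<le> U" and l: "real n / c \<le> real U" and r: "real U \<le> c * real n"
    and a: "a \<in> states n" and b: "b \<in> states n"
  have c0: "c > 0" using assms by simp
  have nc: "real n \<le> c * real U" using l c0 by (simp add: divide_le_eq mult.commute)
  have e: "exp (-8*c) \<le> (1 - 1/real U)^(4*n-1)" by (rule pow_bound[OF U nc])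
  have Upos: "real U > 0" using U by simp
  have "1 / ((2::real)^14 * exp (8*c) * c * real n) = (1/2)^14 * exp (-8*c) * (1 / (c * real n))"
    by (simp add: exp_minus field_simps)
  also have "\<dots> \<le> (1/2)^14 * (1 - 1/real U)^(4*n-1) * (1 / real U)"
  proof (rule mult_mono)
    show "(1/2::real)^14 * exp (-8*c) \<le> (1/2)^14 * (1 - 1/real U)^(4*n-1)" using e by simp
    show "1 / (c * real n) \<le> 1 / real U" using r Upos by (intro divide_left_mono) auto
  qed (use U c0 in auto)
  also have "\<dots> = (1/2)^14 * (1 - 1/real U)^(4*n-1) / real U" by simp
  also have "\<dots> \<le> prob_T n U a b" using core[OF n _ a b] U by simp
  finally show "1 / ((2::real)^14 * exp (8*c) * c * real n) \<le> prob_T n U a b" .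
qed


end
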